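(* Let $0<\delta\le0.01$. Then for every $t\ge1$ and $w\in\mathbb{R}^3\setminus\{0\}$, $$\int_{-1}^{1}\phi_\delta(a_tu_rw)\,dr\le 80\delta^{-1}e^{-\delta t}\phi_\delta(w).$$
   Context: $\|\cdot\|$ is the supremum norm on $\mathbb{R}^3$, $Q_0(v)=v_2^2-2v_1v_3$, $a_t=\mathrm{diag}(e^t,1,e^{-t})$, $u_r=\begin{pmatrix}1&r&r^2/2\\0&1&r\\0&0&1\end{pmatrix}$. For $w=(w_1,w_2,w_3)\ne0$: if $w_2=w_3=0$, set $\rho(w)=\infty$, $\kappa_0(w)=\infty$, $\kappa(w)=1$. Otherwise $\rho(w)=-w_2/w_3\in[-\infty,\infty]$, $\kappa_0(w)=Q_0(w)/w_3^2\in[-\infty,\infty]$, and $\kappa(w)=|\kappa_0(w)|$ if $|\kappa_0(w)|<1$ and $|\rho(w)|<2$, while $\kappa(w)=1$ otherwise. $\phi_\delta(w)=\kappa(w)^{-2\delta}\|w\|^{-1-\delta}\in(0,\infty]$ (equal to $\infty$ when $\kappa(w)=0$). *)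

theory Defs
  imports "HOL-Analysis.Analysis"
begin

definition supnorm3 :: "real^3 \<Rightarrow> real" where
  "supnorm3 w = Max {\<bar>w$1\<bar>, \<bar>w$2\<bar>, \<bar>w$3\<bar>}"

definition Q0 :: "real^3 \<Rightarrow> real" where
  "Q0 v = (v$2)\<^sup>2 - 2 * v$1 * v$3"

definition a_mat :: "real \<Rightarrow> real^3^3" where
  "a_mat t = vector [vector [exp t, 0, 0], vector [0, 1, 0], vector [0, 0, exp (-t)]]"

definition u_mat :: "real \<Rightarrow> real^3^3" where
  "u_mat r = vector [vector [1, r, r\<^sup>2 / 2], vector [0, 1, r], vector [0, 0, 1]]"

definition rho :: "real^3 \<Rightarrow> ereal" where
  "rho w = (if w$2 = 0 \<and> w$3 = 0 then \<infinity>
            else if w$3 \<noteq> 0 then ereal (- (w$2) / (w$3))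
            else if w$2 > 0 then - \<infinity> else \<infinity>)"

definition kappa0 :: "real^3 \<Rightarrow> ereal" where
  "kappa0 w = (if w$2 = 0 \<and> w$3 = 0 then \<infinity>
               else if w$3 \<noteq> 0 then ereal (Q0 w / (w$3)\<^sup>2)
               else \<infinity>)"

definition kappa :: "real^3 \<Rightarrow> real" where
  "kappa w = (if \<bar>kappa0 w\<bar> < 1 \<and> \<bar>rho w\<bar> < 2 then real_of_ereal \<bar>kappa0 w\<bar> else 1)"

definition phi :: "real \<Rightarrow> real^3 \<Rightarrow> ennreal" where
  "phi \<delta> w = (if kappa w = 0 then \<infinity>
              else ennreal (kappa w powr (-2 * \<delta>) * supnorm3 w powr (-1 - \<delta>)))"

end

theory Submission
  imports Defs "HOL-Real_Asymp.Real_Asymp"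
begin


definition gfun :: "real \<Rightarrow> real \<Rightarrow> real \<Rightarrow> real \<Rightarrow> real" where
  "gfun \<delta> c d y = (max (c * \<bar>y\<bar>) d) powr (-1 - \<delta>)"

lemma gfun_meas[measurable]: "gfun \<delta> c d \<in> borel_measurable borel"
  unfolding gfun_def by measurable

lemma tail_int:
  assumes "0 < \<delta>" "0 < c" "0 < d"
  shows "(\<integral>\<^sup>+y. ennreal (gfun \<delta> c d y) * indicator {d/c ..} y \<partial>lborel) = ennreal (d powr (-\<delta>) / (c * \<delta>))"
proof -
  let ?F = "\<lambda>y. - ((c*y) powr (-\<delta>)) / (c*\<delta>)"
  have "(\<integral>\<^sup>+y. ennreal (gfun \<delta> c d y) * indicator {d/c ..} y \<partial>lborel) = 0 - ?F (d/c)"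
  proof (rule nn_integral_FTC_atLeast)
    show "gfun \<delta> c d \<in> borel_measurable borel" by measurable
    fix x assume x: "d/c \<le> x"
    have xpos: "0 < x" using x assms by (smt (verit) divide_pos_pos)
    have "c * x \<ge> d" using x assms by (simp add: field_simps)
    then have g: "gfun \<delta> c d x = (c*x) powr (-1-\<delta>)" unfolding gfun_def using xpos by simp
    show "0 \<le> gfun \<delta> c d x" unfolding gfun_def by simp
    have "(?F has_real_derivative (- (-\<delta> * (c*x) powr (-\<delta> - 1) * c) / (c*\<delta>))) (at x)"
      using xpos assms by (auto intro!: derivative_eq_intros)
    moreover have "(- (-\<delta> * (c*x) powr (-\<delta> - 1) * c) / (c*\<delta>)) = gfun \<delta> c d x"
      proof -
      have e: "-\<delta> - 1 = -1 - \<delta>" by simp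
      show ?thesis using assms by (simp add: g e)
    qed
    ultimately show "(?F has_real_derivative gfun \<delta> c d x) (at x)" by simp
  next
    show "(?F \<longlongrightarrow> 0) at_top" using assms by real_asymp
  qed
  also have "0 - ?F (d/c) = d powr (-\<delta>) / (c * \<delta>)" using assms by simp
  finally show ?thesis .
qed

lemma G_int:
  assumes "0 < \<delta>" "0 < c" "0 < d"
  shows "(\<integral>\<^sup>+y. ennreal (gfun \<delta> c d (y - a)) \<partial>lborel) \<le> ennreal (2 * (1 + 1/\<delta>) * d powr (-\<delta>) / c)"
proof -
  let ?h = "\<lambda>y. ennreal (gfun \<delta> c d y) * indicator {0..} y"
  have tr: "(\<integral>\<^sup>+y. ennreal (gfun \<delta> c d (y - a)) \<partial>lborel) = (\<integral>\<^sup>+y. ennreal (gfun \<delta> c d y) \<partial>lborel)"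
    using nn_integral_real_affine[of "\<lambda>y. ennreal (gfun \<delta> c d (y - a))" 1 a] by simp
  have refl: "(\<integral>\<^sup>+y. ?h (-y) \<partial>lborel) = (\<integral>\<^sup>+y. ?h y \<partial>lborel)"
    using nn_integral_real_affine[of ?h "-1" 0] by simp
  have "(\<integral>\<^sup>+y. ennreal (gfun \<delta> c d y) \<partial>lborel) \<le> (\<integral>\<^sup>+y. ?h y + ?h (-y) \<partial>lborel)"
    by (intro nn_integral_mono) (auto simp: indicator_def gfun_def)
  also have "\<dots> = (\<integral>\<^sup>+y. ?h y \<partial>lborel) + (\<integral>\<^sup>+y. ?h (-y) \<partial>lborel)"
    by (intro nn_integral_add) auto
  also have "\<dots> = 2 * (\<integral>\<^sup>+y. ?h y \<partial>lborel)" using refl by (simp add: mult_2)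
  also have "(\<integral>\<^sup>+y. ?h y \<partial>lborel) \<le> (\<integral>\<^sup>+y. ennreal (d powr (-1-\<delta>)) * indicator {0..d/c} y
        + ennreal (gfun \<delta> c d y) * indicator {d/c ..} y \<partial>lborel)"
  proof (intro nn_integral_mono)
    fix y
    show "?h y \<le> ennreal (d powr (-1-\<delta>)) * indicator {0..d/c} y + ennreal (gfun \<delta> c d y) * indicator {d/c ..} y"
    proof (cases "0 \<le> y \<and> y \<le> d/c")
      case True
      then have "c * \<bar>y\<bar> \<le> d" using assms by (simp add: field_simps)
      then have "gfun \<delta> c d y = d powr (-1-\<delta>)" unfolding gfun_def by (simp add: max_def)
      then show ?thesis using True by (simp add: indicator_def)
    next
      case False
      then show ?thesis by (auto simp: indicator_def)
    qed
  qed
  also have "\<dots> = (\<integral>\<^sup>+y. ennreal (d powr (-1-\<delta>)) * indicator {0..d/c} y \<partial>lborel)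
        + (\<integral>\<^sup>+y. ennreal (gfun \<delta> c d y) * indicator {d/c ..} y \<partial>lborel)"
    by (intro nn_integral_add) auto
  also have "(\<integral>\<^sup>+y. ennreal (d powr (-1-\<delta>)) * indicator {0..d/c} y \<partial>lborel) = ennreal (d powr (-1-\<delta>)) * ennreal (d/c)"
    using assms by (subst nn_integral_cmult_indicator) auto
  also have "\<dots> = ennreal (d powr (-\<delta>) / c)"
  proof -
    have "d powr (-1-\<delta>) * (d/c) = d powr (-\<delta>) / c"
      using assms by (simp add: powr_diff powr_minus field_simps powr_add)
    then show ?thesis using assms by (simp add: ennreal_mult[symmetric])
  qed
  finally have "(\<integral>\<^sup>+y. ennreal (gfun \<delta> c d (y - a)) \<partial>lborel) \<le> 2 * (ennreal (d powr (-\<delta>) / c) + ennreal (d powr (-\<delta>) / (c * \<delta>)))"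
    using tr tail_int[OF assms] by (simp add: mult_left_mono)
  also have "\<dots> = ennreal (2 * (1 + 1/\<delta>) * d powr (-\<delta>) / c)"
  proof -
    have nn: "0 \<le> d powr (-\<delta>) / c" "0 \<le> d powr (-\<delta>) / (c * \<delta>)" using assms by auto
    have "2 * (ennreal (d powr (-\<delta>) / c) + ennreal (d powr (-\<delta>) / (c * \<delta>)))
       = ennreal (2 * (d powr (-\<delta>) / c + d powr (-\<delta>) / (c * \<delta>)))"
      using nn by (metis ennreal_plus mult_2 ennreal_numeral zero_le_numeral ennreal_mult add_nonneg_nonneg)
    also have "2 * (d powr (-\<delta>) / c + d powr (-\<delta>) / (c * \<delta>)) = 2 * (1 + 1/\<delta>) * d powr (-\<delta>) / c"
      using assms by (simp add: field_simps)
    finally show ?thesis .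
  qed
  finally show ?thesis .
qed



definition Y :: "real \<Rightarrow> real \<Rightarrow> real \<Rightarrow> real^3" where
  "Y T k s = vector [T*(s^2-k)/2, -s, 1/T]"

definition NY :: "real \<Rightarrow> real \<Rightarrow> real \<Rightarrow> real" where
  "NY T k s = max (T*\<bar>s^2-k\<bar>/2) (max \<bar>s\<bar> (1/T))"

definition KY :: "real \<Rightarrow> real \<Rightarrow> real \<Rightarrow> real" where
  "KY T k s = (if T^2*\<bar>k\<bar> < 1 \<and> T*\<bar>s\<bar> < 2 then T^2*\<bar>k\<bar> else 1)"

lemma supnorm3_Y: "0 < T \<Longrightarrow> supnorm3 (Y T k s) = NY T k s"
  unfolding supnorm3_def Y_def NY_def by (simp add: abs_mult abs_divide)

lemma NY_pos: "0 < T \<Longrightarrow> 0 < NY T k s"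
  unfolding NY_def by (simp add: less_max_iff_disj)

lemma kappa_Y: "0 < T \<Longrightarrow> kappa (Y T k s) = KY T k s"
proof -
  assume T: "0 < T"
  have q: "Q0 (Y T k s) = k" unfolding Q0_def Y_def using T by (simp add: field_simps)
  have k0: "kappa0 (Y T k s) = ereal (T^2 * k)"
    unfolding kappa0_def using q T by (simp add: Y_def power_divide)
  have r: "rho (Y T k s) = ereal (T * s)"
    unfolding rho_def using T by (simp add: Y_def)
  show ?thesis unfolding kappa_def KY_def k0 r using T by (simp add: abs_mult)
qed

lemma phi_Y: "0 < T \<Longrightarrow> phi \<delta> (Y T k s) = (if KY T k s = 0 then \<infinity>
   else ennreal (KY T k s powr (-2*\<delta>) * NY T k s powr (-1-\<delta>)))"
  unfolding phi_def by (simp add: kappa_Y supnorm3_Y)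

lemma KY_pos: "0 < T \<Longrightarrow> k \<noteq> 0 \<Longrightarrow> 0 < KY T k s"
  unfolding KY_def by simp

lemma supnorm3_scale: "supnorm3 (c *s y) = \<bar>c\<bar> * supnorm3 y"
  unfolding supnorm3_def by (simp add: abs_mult max_mult_distrib_left)

lemma kappa_scale: "c \<noteq> 0 \<Longrightarrow> y$3 \<noteq> 0 \<Longrightarrow> kappa (c *s y) = kappa y"
proof -
  assume c: "c \<noteq> 0" and y: "y$3 \<noteq> 0"
  have "Q0 (c *s y) = c^2 * Q0 y" unfolding Q0_def by (simp add: power2_eq_square algebra_simps)
  then have "kappa0 (c *s y) = kappa0 y" unfolding kappa0_def using c y by (simp add: power_mult_distrib)
  moreover have "rho (c *s y) = rho y" unfolding rho_def using c y by simp
  ultimately show ?thesis unfolding kappa_def by simp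
qed

lemma supnorm3_pos: "y \<noteq> 0 \<Longrightarrow> 0 < supnorm3 y"
proof -
  assume "y \<noteq> 0"
  then obtain i where "y$i \<noteq> 0" by (metis vec_eq_iff zero_index)
  moreover have "\<bar>y$i\<bar> \<le> supnorm3 y" unfolding supnorm3_def
    using exhaust_3[of i] by auto
  ultimately show ?thesis by linarith
qed

lemma phi_scale: "c \<noteq> 0 \<Longrightarrow> y$3 \<noteq> 0 \<Longrightarrow> phi \<delta> (c *s y) = ennreal (\<bar>c\<bar> powr (-1-\<delta>)) * phi \<delta> y"
proof -
  assume c: "c \<noteq> 0" and y: "y$3 \<noteq> 0"
  have yn: "y \<noteq> 0" using y by auto
  have sp: "0 < supnorm3 y" using supnorm3_pos[OF yn] .
  show ?thesis
  proof (cases "kappa y = 0")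
    case True
    then show ?thesis unfolding phi_def using kappa_scale[OF c y] c by (simp add: ennreal_mult_top)
  next
    case False
    have "kappa y powr (-2*\<delta>) * (\<bar>c\<bar> * supnorm3 y) powr (-1-\<delta>) =
          \<bar>c\<bar> powr (-1-\<delta>) * (kappa y powr (-2*\<delta>) * supnorm3 y powr (-1-\<delta>))"
      using c sp by (simp add: powr_mult)
    then show ?thesis unfolding phi_def using kappa_scale[OF c y] False
      by (simp add: supnorm3_scale ennreal_mult[symmetric])
  qed
qed

lemma action: "a_mat t *v (u_mat r *v w) = vector [exp t * (w$1 + r*w$2 + r^2/2*w$3), w$2 + r*w$3, exp (-t) * w$3]"
  unfolding a_mat_def u_mat_def
  by (simp add: vec_eq_iff forall_3 matrix_vector_mult_def sum_3 algebra_simps)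

lemma action_Y:
  assumes "w$3 \<noteq> 0"
  shows "a_mat t *v (u_mat r *v w) = w$3 *s Y (exp t) (Q0 w / (w$3)^2) (- (w$2) / w$3 - r)"
  using assms unfolding action Y_def Q0_def
  by (simp add: vec_eq_iff forall_3 field_simps power2_eq_square exp_minus)

lemma w_Y:
  assumes "w$3 \<noteq> 0"
  shows "w = w$3 *s Y 1 (Q0 w / (w$3)^2) (- (w$2) / w$3)"
  using assms unfolding Y_def Q0_def
  by (simp add: vec_eq_iff forall_3 field_simps power2_eq_square)



definition Gv :: "real \<Rightarrow> real \<Rightarrow> real \<Rightarrow> real" where
  "Gv \<delta> c d = 2 * (1 + 1/\<delta>) * d powr (-\<delta>) / c"

lemma gfun_nonneg: "0 \<le> gfun \<delta> c d y" unfolding gfun_def by simp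

lemma pack:
  assumes "0 < \<delta>" "0 < ca" "0 < da" "0 < cb" "0 < db" "0 \<le> Aa" "0 \<le> Ab"
  and pw: "\<And>r. r \<in> {-1..1} \<Longrightarrow> f r \<le> ennreal (Aa * gfun \<delta> ca da (r - xa) + Ab * gfun \<delta> cb db (r - xb))"
  and num: "Aa * Gv \<delta> ca da + Ab * Gv \<delta> cb db \<le> Q"
  shows "(\<integral>\<^sup>+ r \<in> {-1..1}. f r \<partial>lborel) \<le> ennreal Q"
proof -
  have "(\<integral>\<^sup>+ r \<in> {-1..1}. f r \<partial>lborel) \<le>
     (\<integral>\<^sup>+ r. ennreal Aa * ennreal (gfun \<delta> ca da (r - xa)) + ennreal Ab * ennreal (gfun \<delta> cb db (r - xb)) \<partial>lborel)"
  proof (intro nn_integral_mono)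
    fix r
    show "f r * indicator {-1..1} r \<le> ennreal Aa * ennreal (gfun \<delta> ca da (r - xa)) + ennreal Ab * ennreal (gfun \<delta> cb db (r - xb))"
    proof (cases "r \<in> {-1..1}")
      case True
      then show ?thesis using pw[OF True] assms gfun_nonneg
        by (simp add: ennreal_plus[symmetric] ennreal_mult[symmetric] del: ennreal_plus)
    next
      case False
      then show ?thesis by simp
    qed
  qed
  also have "\<dots> = ennreal Aa * (\<integral>\<^sup>+ r. ennreal (gfun \<delta> ca da (r - xa)) \<partial>lborel)
       + ennreal Ab * (\<integral>\<^sup>+ r. ennreal (gfun \<delta> cb db (r - xb)) \<partial>lborel)"
    by (simp add: nn_integral_add nn_integral_cmult)
  also have "\<dots> \<le> ennreal Aa * ennreal (Gv \<delta> ca da) + ennreal Ab * ennreal (Gv \<delta> cb db)"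
    unfolding Gv_def using G_int assms by (intro add_mono mult_left_mono) auto
  also have "\<dots> = ennreal (Aa * Gv \<delta> ca da + Ab * Gv \<delta> cb db)"
    using assms unfolding Gv_def by (simp add: ennreal_plus[symmetric] ennreal_mult[symmetric] del: ennreal_plus)
  also have "\<dots> \<le> ennreal Q" using num by (simp add: ennreal_leI)
  finally show ?thesis .
qed

lemma root_bound:
  fixes x \<delta> b :: real
  assumes "1 \<le> x" "x \<le> b ^ 100" "0 \<le> \<delta>" "\<delta> \<le> 1/100" "0 < b"
  shows "x powr \<delta> \<le> b"
proof -
  have "x powr \<delta> \<le> x powr (1/100)" using assms by (intro powr_mono) auto
  also have "\<dots> \<le> (b ^ 100) powr (1/100)" using assms by (intro powr_mono2) auto
  also have "(b ^ 100) powr (1/100) = (b powr 100) powr (1/100)" using powr_realpow[of b 100] assms by simp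
  also have "\<dots> = b" using assms by (subst powr_powr) simp
  finally show ?thesis .
qed
lemma pow_small:
  fixes x \<delta> :: real
  assumes "1 \<le> x" "x \<le> 100" "0 \<le> \<delta>" "\<delta> \<le> 0.01"
  shows "x powr \<delta> \<le> 1.05"
proof -
  have h: "100 \<le> (1.05::real) ^ 100" by (simp add: power_divide)
  have hx: "x \<le> (1.05::real) ^ 100" using h assms(2) by linarith
  have hd: "\<delta> \<le> 1/100" using assms by simp
  show ?thesis by (rule root_bound[OF assms(1) hx assms(3) hd]) simp
qed

lemma delta_frac: fixes \<delta> :: real shows "0 < \<delta> \<Longrightarrow> \<delta> \<le> 0.01 \<Longrightarrow> 1 + 1/\<delta> \<le> 1.01/\<delta>"
  by (simp add: field_simps)



definition GOOD :: "real \<Rightarrow> real \<Rightarrow> real \<Rightarrow> real \<Rightarrow> bool" where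
  "GOOD \<delta> T k \<rho> \<longleftrightarrow> (\<exists>A1 c1 a1 d1 A2 c2 a2 d2 P. 0 < c1 \<and> 0 < d1 \<and> 0 < c2 \<and> 0 < d2 \<and> 0 \<le> A1 \<and> 0 \<le> A2
     \<and> 0 \<le> P \<and> phi \<delta> (Y 1 k \<rho>) = ennreal P
     \<and> (\<forall>r\<in>{-1..1}. phi \<delta> (Y T k (\<rho> - r)) \<le> ennreal (A1 * gfun \<delta> c1 d1 (r - a1) + A2 * gfun \<delta> c2 d2 (r - a2)))
     \<and> A1 * Gv \<delta> c1 d1 + A2 * Gv \<delta> c2 d2 \<le> 80/\<delta> * T powr (-\<delta>) * P)"

lemma phi_le_one:
  assumes "0 < T" "KY T k s = 1" "0 < L" "L \<le> NY T k s" "0 < \<delta>"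
  shows "phi \<delta> (Y T k s) \<le> ennreal (L powr (-1-\<delta>))"
proof -
  have "NY T k s powr (-1-\<delta>) \<le> L powr (-1-\<delta>)"
    using assms by (intro powr_mono2') auto
  then show ?thesis using assms by (simp add: phi_Y ennreal_leI)
qed

lemma phi_Y1: "KY 1 k \<rho> \<noteq> 0 \<Longrightarrow> phi \<delta> (Y 1 k \<rho>) = ennreal (KY 1 k \<rho> powr (-2*\<delta>) * NY 1 k \<rho> powr (-1-\<delta>))"
  by (simp add: phi_Y)

lemma KY1: "KY 1 k \<rho> = (if \<bar>k\<bar> < 1 \<and> \<bar>\<rho>\<bar> < 2 then \<bar>k\<bar> else 1)"
  unfolding KY_def by simp

lemma NY1: "NY 1 k \<rho> = max (\<bar>\<rho>^2-k\<bar>/2) (max \<bar>\<rho>\<bar> 1)"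
  unfolding NY_def by simp

lemma quad_lower:
  fixes s k :: real
  assumes "0 \<le> s"
  shows "sqrt \<bar>k\<bar> * \<bar>s - sqrt \<bar>k\<bar>\<bar> \<le> \<bar>s^2 - k\<bar>"
proof -
  define a where "a = sqrt \<bar>k\<bar>"
  have a0: "0 \<le> a" and a2: "a^2 = \<bar>k\<bar>" unfolding a_def by auto
  show ?thesis
  proof (cases "0 \<le> k")
    case True
    then have "s^2 - k = (s - a) * (s + a)" using a2 by (simp add: power2_eq_square algebra_simps)
    then have "\<bar>s^2 - k\<bar> = \<bar>s - a\<bar> * (s + a)" using assms a0 by (simp add: abs_mult)
    moreover have "\<bar>s - a\<bar> * a \<le> \<bar>s - a\<bar> * (s + a)" using assms by (intro mult_left_mono) auto
    ultimately show ?thesis unfolding a_def[symmetric] by (simp add: mult.commute)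
  next
    case False
    then have e0: "s^2 - k = s^2 + a^2" using a2 by simp
    have nn: "0 \<le> s * s + a * a" by simp
    have e1: "s * s - k = s * s + a * a" using e0 by (simp add: power2_eq_square)
    have e: "\<bar>s^2 - k\<bar> = s * s + a * a" unfolding power2_eq_square e1 using nn by (rule abs_of_nonneg)
    show ?thesis
    proof (cases "a \<le> s")
      case True
      then have "a * \<bar>s - a\<bar> = a * s - a^2" by (simp add: power2_eq_square algebra_simps)
      also have "\<dots> \<le> s * s" using True a0 assms by (smt (verit) mult_right_mono power2_eq_square zero_le_power2)
      finally have "a * \<bar>s - a\<bar> \<le> s * s" .
      moreover have "0 \<le> a * a" using a0 by simp
      ultimately show ?thesis unfolding a_def[symmetric] e by linarith
    next
      case False
      then have "a * \<bar>s - a\<bar> = a^2 - a * s" by (simp add: power2_eq_square algebra_simps)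
      also have "\<dots> \<le> a^2 + s^2" using a0 assms by (smt (verit) mult_nonneg_nonneg zero_le_power2)
      finally show ?thesis unfolding a_def[symmetric] e by (simp add: add.commute power2_eq_square)
    qed
  qed
qed

lemma quad_lower':
  fixes s k :: real
  assumes "s \<le> 0"
  shows "sqrt \<bar>k\<bar> * \<bar>s + sqrt \<bar>k\<bar>\<bar> \<le> \<bar>s^2 - k\<bar>"
proof -
  have "\<bar>s + sqrt \<bar>k\<bar>\<bar> = \<bar>- s - sqrt \<bar>k\<bar>\<bar>" by simp
  then show ?thesis using quad_lower[of "-s" k] assms by simp
qed



lemma sq_lt4: "\<bar>\<rho>::real\<bar> < 2 \<Longrightarrow> \<rho>^2 < 4"
proof -
  assume h: "\<bar>\<rho>\<bar> < 2"
  have "\<bar>\<rho>\<bar>^2 < 2^2" using h by (intro power_strict_mono) auto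
  then show ?thesis by simp
qed

lemma M_small: "\<bar>k\<bar> < 1 \<Longrightarrow> \<bar>\<rho>\<bar> < 2 \<Longrightarrow> 1 \<le> NY 1 k \<rho> \<and> NY 1 k \<rho> \<le> 5/2"
proof -
  assume k: "\<bar>k\<bar> < 1" and r: "\<bar>\<rho>\<bar> < 2"
  have "\<rho>^2 < 4" using sq_lt4[OF r] .
  moreover have "0 \<le> \<rho>^2" by simp
  ultimately have "\<bar>\<rho>^2 - k\<bar> \<le> 5" using k by linarith
  then show ?thesis using r unfolding NY1 by (auto simp: max_def)
qed

lemma M_pow_lower:
  fixes M \<delta> :: real
  assumes "1 \<le> M" "M \<le> B" "B \<le> 100" "0 < \<delta>" "\<delta> \<le> 0.01"
  shows "1 / (B * 1.05) \<le> M powr (-1-\<delta>)"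
proof -
  have p: "M powr \<delta> \<le> 1.05" using pow_small[of M \<delta>] assms by simp
  have e: "M powr (-1-\<delta>) = 1 / (M * M powr \<delta>)"
    using assms by (simp add: powr_diff powr_minus_divide powr_add[symmetric] powr_mult_base)
  have "M * M powr \<delta> \<le> B * 1.05" using assms p by (intro mult_mono) auto
  moreover have "0 < M * M powr \<delta>" using assms by simp
  ultimately show ?thesis unfolding e by (intro divide_left_mono) auto
qed

lemma inv_le_powr:
  fixes x \<delta> :: real
  assumes "1 \<le> x" "\<delta> \<le> 1"
  shows "1 / x \<le> x powr (-\<delta>)"
proof -
  have "x powr (-1) \<le> x powr (-\<delta>)" using assms by (intro powr_mono) auto
  then show ?thesis using assms by (simp add: powr_minus_divide)
qed

lemma inv_powr: "0 < (y::real) \<Longrightarrow> y powr (-\<delta>) = (1/y) powr \<delta>"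
  by (subst powr_divide) (auto simp: powr_minus_divide)
lemma sqrt_powr: "0 \<le> (x::real) \<Longrightarrow> sqrt x powr (-\<delta>) * sqrt x powr (-\<delta>) = x powr (-\<delta>)"
proof -
  assume x: "0 \<le> x"
  have "sqrt x powr (-\<delta>) * sqrt x powr (-\<delta>) = sqrt x powr (-\<delta> + -\<delta>)"
    by (simp only: powr_add)
  also have "\<dots> = (x powr (1/2)) powr (-\<delta> + -\<delta>)" using x by (simp only: powr_half_sqrt)
  also have "\<dots> = x powr (-\<delta>)" by (simp add: powr_powr)
  finally show ?thesis .
qed

lemma caseS1:
  assumes d: "0 < \<delta>" "\<delta> \<le> 0.01" and T: "2 \<le> T" and k: "\<bar>k\<bar> < 1" "k \<noteq> 0"
    and rho: "\<bar>\<rho>\<bar> < 2" and big: "1 \<le> T^2 * \<bar>k\<bar>"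
  shows "GOOD \<delta> T k \<rho>"
proof -
  define a where "a = sqrt \<bar>k\<bar>"
  have a0: "0 < a" using k by (simp add: a_def)
  have a2: "a^2 = \<bar>k\<bar>" by (simp add: a_def)
  have Ta: "1 \<le> T * a"
  proof -
    have "T * a = sqrt (T^2 * \<bar>k\<bar>)" using T by (simp add: a_def real_sqrt_mult)
    then show ?thesis using big by simp
  qed
  define M where "M = NY 1 k \<rho>"
  have KYw: "KY 1 k \<rho> = \<bar>k\<bar>" using k rho by (simp add: KY1)
  have M1: "1 \<le> M" "M \<le> 5/2" using M_small[OF k(1) rho] by (auto simp: M_def)
  define P where "P = \<bar>k\<bar> powr (-2*\<delta>) * M powr (-1-\<delta>)"
  define c where "c = T * a / 2"
  define dd where "dd = 3 * a / 8"
  have c0: "0 < c" and d0: "0 < dd" using a0 T by (auto simp: c_def dd_def)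
  have pw: "phi \<delta> (Y T k (\<rho> - r)) \<le> ennreal (1 * gfun \<delta> c dd (r - (\<rho> - a)) + 1 * gfun \<delta> c dd (r - (\<rho> + a)))"
    if r: "r \<in> {-1..1}" for r
  proof -
    define s where "s = \<rho> - r"
    have T0: "0 < T" using T by simp
    have KYv: "KY T k s = 1" using big unfolding KY_def by auto
    have N1: "\<bar>s\<bar> \<le> NY T k s" "T * \<bar>s^2 - k\<bar> / 2 \<le> NY T k s" unfolding NY_def by auto
    have floor: "dd \<le> NY T k s"
    proof (cases "a/2 \<le> \<bar>s\<bar>")
      case True
      then show ?thesis using N1 a0 unfolding dd_def by linarith
    next
      case False
      then have "\<bar>s\<bar>^2 \<le> (a/2)^2" using a0 by (intro power_mono) auto
      then have "s^2 \<le> a^2/4" by (simp add: power_divide)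
      moreover have "\<bar>k\<bar> - s^2 \<le> \<bar>s^2 - k\<bar>" using zero_le_power2[of s] by linarith
      ultimately have "3 * a^2 / 4 \<le> \<bar>s^2 - k\<bar>" using a2 by linarith
      then have "T * (3 * a^2 / 4) / 2 \<le> NY T k s" using N1(2) T0
        by (smt (verit) divide_right_mono mult_left_mono)
      moreover have "dd \<le> T * (3 * a^2 / 4) / 2"
      proof -
        have "dd * 1 \<le> dd * (T * a)" using Ta d0 by (intro mult_left_mono) auto
        then show ?thesis unfolding dd_def by (simp add: power2_eq_square field_simps)
      qed
      ultimately show ?thesis by linarith
    qed
    have main: "max (c * \<bar>r - (\<rho> - a)\<bar>) dd \<le> NY T k s \<or> max (c * \<bar>r - (\<rho> + a)\<bar>) dd \<le> NY T k s"
    proof (cases "0 \<le> s")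
      case True
      have "a * \<bar>s - a\<bar> \<le> \<bar>s^2 - k\<bar>" using quad_lower[OF True, of k] by (simp add: a_def)
      then have "T * (a * \<bar>s - a\<bar>) / 2 \<le> T * \<bar>s^2 - k\<bar> / 2" using T0
        by (smt (verit) divide_right_mono mult_left_mono)
      moreover have "c * \<bar>r - (\<rho> - a)\<bar> = T * (a * \<bar>s - a\<bar>) / 2"
      proof -
        have "\<bar>r - (\<rho> - a)\<bar> = \<bar>s - a\<bar>" unfolding s_def by linarith
        then show ?thesis unfolding c_def by simp
      qed
      ultimately show ?thesis using N1 floor by simp
    next
      case False
      have "a * \<bar>s + a\<bar> \<le> \<bar>s^2 - k\<bar>" using quad_lower'[of s k] False by (simp add: a_def)
      then have "T * (a * \<bar>s + a\<bar>) / 2 \<le> T * \<bar>s^2 - k\<bar> / 2" using T0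
        by (smt (verit) divide_right_mono mult_left_mono)
      moreover have "c * \<bar>r - (\<rho> + a)\<bar> = T * (a * \<bar>s + a\<bar>) / 2"
      proof -
        have "\<bar>r - (\<rho> + a)\<bar> = \<bar>s + a\<bar>" unfolding s_def by linarith
        then show ?thesis unfolding c_def by simp
      qed
      ultimately show ?thesis using N1 floor by simp
    qed
    have g: "phi \<delta> (Y T k s) \<le> ennreal (gfun \<delta> c dd (r - (\<rho> - a))) \<or> phi \<delta> (Y T k s) \<le> ennreal (gfun \<delta> c dd (r - (\<rho> + a)))"
      unfolding gfun_def using main phi_le_one[OF T0 KYv _ _ d(1)] d0 by (meson less_max_iff_disj)
    have "ennreal (gfun \<delta> c dd (r - (\<rho> - a))) \<le> ennreal (1 * gfun \<delta> c dd (r - (\<rho> - a)) + 1 * gfun \<delta> c dd (r - (\<rho> + a)))"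
         "ennreal (gfun \<delta> c dd (r - (\<rho> + a))) \<le> ennreal (1 * gfun \<delta> c dd (r - (\<rho> - a)) + 1 * gfun \<delta> c dd (r - (\<rho> + a)))"
      by (auto intro!: ennreal_leI simp: gfun_nonneg)
    then show ?thesis using g unfolding s_def by (meson order_trans)
  qed
  have num: "1 * Gv \<delta> c dd + 1 * Gv \<delta> c dd \<le> 80/\<delta> * T powr (-\<delta>) * P"
  proof -
    have f1: "dd powr (-\<delta>) = (8/3) powr \<delta> * a powr (-\<delta>)"
      unfolding dd_def using a0 by (simp add: powr_mult inv_powr powr_minus_divide powr_divide)
    have f2: "(8/3) powr \<delta> \<le> 1.05" using pow_small[of "8/3" \<delta>] d by simp
    have f3: "1 / (T * a) \<le> T powr (-\<delta>) * a powr (-\<delta>)"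
      using inv_le_powr[OF Ta, of \<delta>] d T a0 by (simp add: powr_mult)
    have f5: "a powr (-\<delta>) * a powr (-\<delta>) \<le> \<bar>k\<bar> powr (-2*\<delta>)"
    proof -
      have "a powr (-\<delta>) * a powr (-\<delta>) = \<bar>k\<bar> powr (-\<delta>)" unfolding a_def by (rule sqrt_powr) simp
      also have "\<dots> \<le> \<bar>k\<bar> powr (-2*\<delta>)" using k d by (intro powr_mono') auto
      finally show ?thesis .
    qed
    have f7: "1 / (5/2 * 1.05) \<le> M powr (-1-\<delta>)" using M_pow_lower[OF M1(1) M1(2) _ d] by simp
    have f8: "1 + 1/\<delta> \<le> 1.01/\<delta>" using delta_frac d by simp
    have "1 * Gv \<delta> c dd + 1 * Gv \<delta> c dd = 8 * (1 + 1/\<delta>) * ((8/3) powr \<delta>) * (a powr (-\<delta>) * (1 / (T * a)))"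
      unfolding Gv_def c_def f1 using a0 T by (simp add: field_simps)
    also have "\<dots> \<le> 8 * (1.01/\<delta>) * 1.05 * (a powr (-\<delta>) * (T powr (-\<delta>) * a powr (-\<delta>)))"
      using f2 f3 f8 d a0 Ta by (intro mult_mono mult_left_mono) auto
    also have "\<dots> = 8 * (1.01/\<delta>) * 1.05 * T powr (-\<delta>) * (a powr (-\<delta>) * a powr (-\<delta>))"
      by (simp add: algebra_simps)
    also have "\<dots> \<le> 8 * (1.01/\<delta>) * 1.05 * T powr (-\<delta>) * \<bar>k\<bar> powr (-2*\<delta>)"
      using f5 d by (intro mult_left_mono) auto
    also have "\<dots> \<le> 80/\<delta> * T powr (-\<delta>) * (\<bar>k\<bar> powr (-2*\<delta>) * (1 / (5/2 * 1.05)))"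
      using d by (simp add: field_simps)
    also have "\<dots> \<le> 80/\<delta> * T powr (-\<delta>) * P"
      unfolding P_def using f7 d by (intro mult_left_mono) auto
    finally show ?thesis .
  qed
  have phiw: "phi \<delta> (Y 1 k \<rho>) = ennreal P"
    unfolding P_def M_def using phi_Y1[of k \<rho> \<delta>] KYw k by simp
  show ?thesis unfolding GOOD_def
    apply (rule exI[of _ 1], rule exI[of _ c], rule exI[of _ "\<rho> - a"], rule exI[of _ dd])
    apply (rule exI[of _ 1], rule exI[of _ c], rule exI[of _ "\<rho> + a"], rule exI[of _ dd])
    apply (rule exI[of _ P])
    using c0 d0 pw num phiw by (auto simp: P_def)
qed



lemma caseS2:
  assumes d: "0 < \<delta>" "\<delta> \<le> 0.01" and T: "2 \<le> T" and k: "\<bar>k\<bar> < 1" "k \<noteq> 0"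
    and rho: "\<bar>\<rho>\<bar> < 2" and small: "T^2 * \<bar>k\<bar> < 1"
  shows "GOOD \<delta> T k \<rho>"
proof -
  have T0: "0 < T" using T by simp
  define M where "M = NY 1 k \<rho>"
  have KYw: "KY 1 k \<rho> = \<bar>k\<bar>" using k rho by (simp add: KY1)
  have M1: "1 \<le> M" "M \<le> 5/2" using M_small[OF k(1) rho] by (auto simp: M_def)
  define P where "P = \<bar>k\<bar> powr (-2*\<delta>) * M powr (-1-\<delta>)"
  define K where "K = (T^2 * \<bar>k\<bar>) powr (-2*\<delta>)"
  have K1: "1 \<le> K"
  proof -
    have x0: "0 < T^2 * \<bar>k\<bar>" using k T0 by simp
    have "(T^2 * \<bar>k\<bar>) powr (2*\<delta>) \<le> 1" using small x0 d by (intro powr_le1) auto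
    moreover have "0 < (T^2 * \<bar>k\<bar>) powr (2*\<delta>)" using x0 by (simp only: powr_gt_zero)
    ultimately show ?thesis unfolding K_def using T0 k by (simp add: powr_minus_divide)
  qed
  define A1 where "A1 = (2*T) powr (1+\<delta>) * K"
  have A10: "0 \<le> A1" unfolding A1_def K_def by simp
  have pw: "phi \<delta> (Y T k (\<rho> - r)) \<le> ennreal (A1 * gfun \<delta> T 1 (r - \<rho>) + 0 * gfun \<delta> 1 1 (r - 0))"
    if r: "r \<in> {-1..1}" for r
  proof -
    define s where "s = \<rho> - r"
    have rs: "\<bar>r - \<rho>\<bar> = \<bar>s\<bar>" unfolding s_def by linarith
    have N1: "\<bar>s\<bar> \<le> NY T k s" "T * \<bar>s^2 - k\<bar> / 2 \<le> NY T k s" "1/T \<le> NY T k s" unfolding NY_def by auto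
    have "phi \<delta> (Y T k s) \<le> ennreal (A1 * gfun \<delta> T 1 (r - \<rho>))"
    proof (cases "T * \<bar>s\<bar> < 2")
      case True
      have KYv: "KY T k s = T^2 * \<bar>k\<bar>" using True small unfolding KY_def by auto
      have "NY T k s powr (-1-\<delta>) \<le> (1/T) powr (-1-\<delta>)"
        using N1 T0 d by (intro powr_mono2') auto
      also have "(1/T) powr (-1-\<delta>) = T powr (1+\<delta>)"
        using T0 by (simp add: powr_divide powr_minus_divide[symmetric] add.commute)
      finally have a: "NY T k s powr (-1-\<delta>) \<le> T powr (1+\<delta>)" .
      have "2 powr (-1-\<delta>) \<le> gfun \<delta> T 1 (r - \<rho>)"
        unfolding gfun_def rs using True d by (intro powr_mono2') auto
      then have "(2*T) powr (1+\<delta>) * K * 2 powr (-1-\<delta>) \<le> A1 * gfun \<delta> T 1 (r - \<rho>)"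
        unfolding A1_def using K1 by (intro mult_left_mono) auto
      moreover have "(2*T) powr (1+\<delta>) * K * 2 powr (-1-\<delta>) = K * T powr (1+\<delta>)"
      proof -
        have "2 powr (1+\<delta>) * 2 powr (-1-\<delta>) = 1" by (simp add: powr_add[symmetric])
        then show ?thesis using T0 by (simp add: powr_mult algebra_simps)
      qed
      moreover have "K * NY T k s powr (-1-\<delta>) \<le> K * T powr (1+\<delta>)"
        using a K1 by (intro mult_left_mono) auto
      ultimately have "K * NY T k s powr (-1-\<delta>) \<le> A1 * gfun \<delta> T 1 (r - \<rho>)" by linarith
      moreover have "KY T k s \<noteq> 0" using KYv k T0 by simp
      ultimately show ?thesis using T0 by (simp add: phi_Y KYv K_def ennreal_leI)
    next
      case False
      have KYv: "KY T k s = 1" using False unfolding KY_def by auto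
      have Ts: "2 \<le> T * \<bar>s\<bar>" using False by simp
      have s0: "0 < \<bar>s\<bar>" using Ts T0 by (cases "s = 0") auto
      have "2^2 \<le> (T * \<bar>s\<bar>)^2" by (rule power_mono) (use Ts in auto)
      then have "4 \<le> (T * \<bar>s\<bar>)^2" by simp
      then have "4 * \<bar>k\<bar> \<le> (T * \<bar>s\<bar>)^2 * \<bar>k\<bar>" by (intro mult_right_mono) auto
      also have "\<dots> = s^2 * (T^2 * \<bar>k\<bar>)" by (simp add: power_mult_distrib)
      also have "\<dots> \<le> s^2" using small by (intro mult_left_le) auto
      finally have "4 * \<bar>k\<bar> \<le> s^2" .
      moreover have "s^2 - \<bar>k\<bar> \<le> \<bar>s^2 - k\<bar>" by linarith
      ultimately have "3 * s^2 / 4 \<le> \<bar>s^2 - k\<bar>" by linarith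
      then have "T * (3 * s^2 / 4) / 2 \<le> NY T k s" using N1(2) T0
        by (smt (verit) divide_right_mono mult_left_mono)
      moreover have "\<bar>s\<bar> / 2 \<le> T * (3 * s^2 / 4) / 2"
      proof -
        have "\<bar>s\<bar> * 2 \<le> \<bar>s\<bar> * (T * \<bar>s\<bar>)" using Ts s0 by (intro mult_left_mono) auto
        moreover have "\<bar>s\<bar> * (T * \<bar>s\<bar>) = T * s^2" by (simp add: power2_eq_square abs_mult_self_eq)
        moreover have "T * (3 * s^2 / 4) / 2 = 3/8 * (T * s^2)" by simp
        ultimately show ?thesis using s0 by linarith
      qed
      ultimately have Nl: "(T * \<bar>s\<bar>) / (2*T) \<le> NY T k s" using T0 by simp
      have "phi \<delta> (Y T k s) \<le> ennreal (((T * \<bar>s\<bar>) / (2*T)) powr (-1-\<delta>))"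
        using phi_le_one[OF T0 KYv _ Nl d(1)] s0 T0 by simp
      also have "((T * \<bar>s\<bar>) / (2*T)) powr (-1-\<delta>) = (2*T) powr (1+\<delta>) * (T * \<bar>s\<bar>) powr (-1-\<delta>)"
      proof -
        have "(2*T) powr (-1-\<delta>) = 1 / (2*T) powr (1+\<delta>)" using powr_minus_divide[of "2*T" "1+\<delta>"] by simp
        moreover have "((T * \<bar>s\<bar>) / (2*T)) powr (-1-\<delta>) = (T * \<bar>s\<bar>) powr (-1-\<delta>) / (2*T) powr (-1-\<delta>)"
          by (rule powr_divide)
        moreover have "(T * \<bar>s\<bar>) powr (-1-\<delta>) / (1 / (2*T) powr (1+\<delta>)) = (2*T) powr (1+\<delta>) * (T * \<bar>s\<bar>) powr (-1-\<delta>)"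
          by (simp only: divide_divide_eq_right div_by_1 mult.commute)
        ultimately show ?thesis by (simp only:)
      qed
      also have "(T * \<bar>s\<bar>) powr (-1-\<delta>) = gfun \<delta> T 1 (r - \<rho>)"
        unfolding gfun_def rs using Ts by simp
      also have "(2*T) powr (1+\<delta>) * gfun \<delta> T 1 (r - \<rho>) \<le> A1 * gfun \<delta> T 1 (r - \<rho>)"
      proof -
        have "(2*T) powr (1+\<delta>) * 1 \<le> (2*T) powr (1+\<delta>) * K" using K1 by (intro mult_left_mono) auto
        then show ?thesis unfolding A1_def using gfun_nonneg by (intro mult_right_mono) auto
      qed
      finally show ?thesis by (simp add: ennreal_leI)
    qed
    then show ?thesis unfolding s_def by simp
  qed
  have num: "A1 * Gv \<delta> T 1 + 0 * Gv \<delta> 1 1 \<le> 80/\<delta> * T powr (-\<delta>) * P"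
  proof -
    have eK: "K = T powr (-4*\<delta>) * \<bar>k\<bar> powr (-2*\<delta>)"
    proof -
      have "(T^2) powr (-2*\<delta>) = T powr (-4*\<delta>)"
      proof -
        have "T^2 = T powr 2" using powr_realpow[of T 2] T0 by simp
        then show ?thesis by (simp only: powr_powr) simp
      qed
      then show ?thesis unfolding K_def by (simp add: powr_mult)
    qed
    have e1: "(2*T) powr (1+\<delta>) / T = 2 powr (1+\<delta>) * T powr \<delta>"
      using T0 by (simp add: powr_mult powr_add)
    have e2: "T powr \<delta> * T powr (-4*\<delta>) \<le> T powr (-\<delta>)"
    proof -
      have "T powr \<delta> * T powr (-4*\<delta>) = T powr (-3*\<delta>)" by (simp add: powr_add[symmetric])
      also have "\<dots> \<le> T powr (-\<delta>)" using T d by (intro powr_mono) auto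
      finally show ?thesis .
    qed
    have f2: "2 powr (1+\<delta>) \<le> 2 * 1.05"
      using pow_small[of 2 \<delta>] d by (simp add: powr_add)
    have f7: "1 / (5/2 * 1.05) \<le> M powr (-1-\<delta>)" using M_pow_lower[OF M1(1) M1(2) _ d] by simp
    have f8: "1 + 1/\<delta> \<le> 1.01/\<delta>" using delta_frac d by simp
    have "A1 * Gv \<delta> T 1 + 0 * Gv \<delta> 1 1 = 2 * (1 + 1/\<delta>) * (((2*T) powr (1+\<delta>) / T) * K)"
      unfolding Gv_def A1_def by simp
    also have "\<dots> = 2 * (1 + 1/\<delta>) * 2 powr (1+\<delta>) * (T powr \<delta> * T powr (-4*\<delta>)) * \<bar>k\<bar> powr (-2*\<delta>)"
      unfolding e1 eK by (simp add: algebra_simps)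
    also have "\<dots> \<le> 2 * (1.01/\<delta>) * (2 * 1.05) * T powr (-\<delta>) * \<bar>k\<bar> powr (-2*\<delta>)"
      using f2 f8 e2 d by (intro mult_mono mult_right_mono) auto
    also have "\<dots> \<le> 80/\<delta> * T powr (-\<delta>) * (\<bar>k\<bar> powr (-2*\<delta>) * (1 / (5/2 * 1.05)))"
      using d by (simp add: field_simps)
    also have "\<dots> \<le> 80/\<delta> * T powr (-\<delta>) * P"
      unfolding P_def using f7 d by (intro mult_left_mono) auto
    finally show ?thesis .
  qed
  have phiw: "phi \<delta> (Y 1 k \<rho>) = ennreal P"
    unfolding P_def M_def using phi_Y1[of k \<rho> \<delta>] KYw k by simp
  show ?thesis unfolding GOOD_def
    apply (rule exI[of _ A1], rule exI[of _ T], rule exI[of _ "\<rho>"], rule exI[of _ 1])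
    apply (rule exI[of _ 0], rule exI[of _ 1], rule exI[of _ 0], rule exI[of _ 1])
    apply (rule exI[of _ P])
    using T0 A10 pw num phiw by (auto simp: P_def)
qed



lemma lin_aux: "(Z::real) \<le> 5/2*R \<Longrightarrow> X \<le> W + Z \<Longrightarrow> 10*R \<le> X \<Longrightarrow> 3/4*X \<le> W" by linarith

lemma gfun11: "r \<in> {-1..1} \<Longrightarrow> gfun \<delta> 1 1 (r - 0) = 1"
  unfolding gfun_def by (auto simp: max_def)

lemma const_num:
  fixes q T M \<delta> :: real
  assumes d: "0 < \<delta>" "\<delta> \<le> 0.01" and q: "0 < q" "q \<le> 1" "1/q \<le> 37" and T: "1 \<le> T" and M: "0 < M"
  shows "(q * T * M) powr (-1-\<delta>) * Gv \<delta> 1 1 + 0 * Gv \<delta> 1 1 \<le> 80/\<delta> * T powr (-\<delta>) * M powr (-1-\<delta>)"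
proof -
  have e: "(q * T * M) powr (-1-\<delta>) = (1/q) powr (1+\<delta>) * T powr (-1-\<delta>) * M powr (-1-\<delta>)"
  proof -
    have "q powr (-1-\<delta>) = (1/q) powr (1+\<delta>)" using q inv_powr[of q "1+\<delta>"] by simp
    then show ?thesis by (simp add: powr_mult)
  qed
  have f1: "(1/q) powr (1+\<delta>) \<le> (1/q) * 1.05"
  proof -
    have "(1/q) powr \<delta> \<le> 1.05" using pow_small[of "1/q" \<delta>] q d by simp
    then have "(1/q) * (1/q) powr \<delta> \<le> (1/q) * 1.05" using q by (intro mult_left_mono) auto
    moreover have "(1/q) powr (1+\<delta>) = (1/q) * (1/q) powr \<delta>" using q by (simp only: powr_add) simp
    ultimately show ?thesis by simp
  qed
  have f2: "T powr (-1-\<delta>) \<le> T powr (-\<delta>)" using T by (intro powr_mono) auto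
  have f8: "1 + 1/\<delta> \<le> 1.01/\<delta>" using delta_frac d by simp
  have "(q * T * M) powr (-1-\<delta>) * Gv \<delta> 1 1 + 0 * Gv \<delta> 1 1
      = 2 * (1 + 1/\<delta>) * (1/q) powr (1+\<delta>) * T powr (-1-\<delta>) * M powr (-1-\<delta>)"
    unfolding Gv_def e by simp
  also have "\<dots> \<le> 2 * (1.01/\<delta>) * ((1/q) * 1.05) * T powr (-\<delta>) * M powr (-1-\<delta>)"
    using f1 f2 f8 d q by (intro mult_mono mult_right_mono) auto
  also have "\<dots> \<le> 80/\<delta> * T powr (-\<delta>) * M powr (-1-\<delta>)"
  proof -
    have "2 * (1.01/\<delta>) * ((1/q) * 1.05) \<le> 80/\<delta>" using q d by (simp add: field_simps)
    then show ?thesis by (intro mult_right_mono) auto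
  qed
  finally show ?thesis .
qed

lemma phiw_one: "KY 1 k \<rho> = 1 \<Longrightarrow> phi \<delta> (Y 1 k \<rho>) = ennreal (NY 1 k \<rho> powr (-1-\<delta>))"
  by (simp add: phi_Y)

lemma caseB1a:
  assumes d: "0 < \<delta>" "\<delta> \<le> 0.01" and T: "2 \<le> T" and rho: "2 \<le> \<bar>\<rho>\<bar>" and big: "10 * \<bar>\<rho>\<bar> \<le> \<bar>\<rho>^2 - k\<bar>"
  shows "GOOD \<delta> T k \<rho>"
proof -
  have T0: "0 < T" using T by simp
  define M where "M = NY 1 k \<rho>"
  have KYw: "KY 1 k \<rho> = 1" using rho by (simp add: KY1)
  have Me: "M = \<bar>\<rho>^2 - k\<bar> / 2" using big rho unfolding M_def NY1 by (auto simp: max_def)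
  have M0: "0 < M" using Me big rho by simp
  define A1 where "A1 = (3/4 * T * M) powr (-1-\<delta>)"
  have pw: "phi \<delta> (Y T k (\<rho> - r)) \<le> ennreal (A1 * gfun \<delta> 1 1 (r - 0) + 0 * gfun \<delta> 1 1 (r - 0))"
    if r: "r \<in> {-1..1}" for r
  proof -
    define s where "s = \<rho> - r"
    have sr: "\<bar>s - \<rho>\<bar> \<le> 1" "\<bar>s + \<rho>\<bar> \<le> 2 * \<bar>\<rho>\<bar> + 1" "1 \<le> \<bar>s\<bar>" using r rho unfolding s_def by auto
    have KYv: "KY T k s = 1" using sr T unfolding KY_def by (auto simp: not_less intro!: order_trans[OF _ mult_mono[of 2 T 1 "\<bar>s\<bar>"]])
    have "\<bar>s^2 - \<rho>^2\<bar> = \<bar>s - \<rho>\<bar> * \<bar>s + \<rho>\<bar>" by (simp add: abs_mult[symmetric] power2_eq_square algebra_simps)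
    also have "\<dots> \<le> 1 * (2 * \<bar>\<rho>\<bar> + 1)" using sr by (intro mult_mono) auto
    finally have "\<bar>s^2 - \<rho>^2\<bar> \<le> 2 * \<bar>\<rho>\<bar> + 1" by simp
    then have "\<bar>s^2 - \<rho>^2\<bar> \<le> 5/2 * \<bar>\<rho>\<bar>" using rho by linarith
    moreover have "\<bar>\<rho>^2 - k\<bar> \<le> \<bar>s^2 - k\<bar> + \<bar>s^2 - \<rho>^2\<bar>" by linarith
    ultimately have "3/4 * \<bar>\<rho>^2 - k\<bar> \<le> \<bar>s^2 - k\<bar>" using big by (rule lin_aux)
    then have "T * (3/4 * \<bar>\<rho>^2 - k\<bar>) / 2 \<le> NY T k s" unfolding NY_def using T0
      by (smt (verit) divide_right_mono mult_left_mono max.cobounded1)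
    then have Nl: "3/4 * T * M \<le> NY T k s" unfolding Me by simp
    have "phi \<delta> (Y T k s) \<le> ennreal A1" unfolding A1_def
      using phi_le_one[OF T0 KYv _ Nl d(1)] T0 M0 by simp
    then show ?thesis using gfun11[OF r] unfolding s_def by simp
  qed
  have num: "A1 * Gv \<delta> 1 1 + 0 * Gv \<delta> 1 1 \<le> 80/\<delta> * T powr (-\<delta>) * M powr (-1-\<delta>)"
    unfolding A1_def using const_num[of \<delta> "3/4" T M] d T M0 by simp
  have phiw: "phi \<delta> (Y 1 k \<rho>) = ennreal (M powr (-1-\<delta>))" unfolding M_def using KYw by (rule phiw_one)
  show ?thesis unfolding GOOD_def
    apply (rule exI[of _ A1], rule exI[of _ 1], rule exI[of _ 0], rule exI[of _ 1])
    apply (rule exI[of _ 0], rule exI[of _ 1], rule exI[of _ 0], rule exI[of _ 1])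
    apply (rule exI[of _ "M powr (-1-\<delta>)"])
    using pw num phiw by (auto simp: A1_def)
qed



lemma quad_lower2:
  fixes s k :: real
  assumes "0 \<le> s"
  shows "s * \<bar>s - sqrt (max k 0)\<bar> \<le> \<bar>s^2 - k\<bar>"
proof (cases "0 \<le> k")
  case True
  define b where "b = sqrt k"
  have b0: "0 \<le> b" and b2: "b^2 = k" using True by (auto simp: b_def)
  have "s^2 - k = (s - b) * (s + b)" using b2 by (simp add: power2_eq_square algebra_simps)
  then have "\<bar>s^2 - k\<bar> = \<bar>s - b\<bar> * (s + b)" using assms b0 by (simp add: abs_mult)
  moreover have "\<bar>s - b\<bar> * s \<le> \<bar>s - b\<bar> * (s + b)" using b0 by (intro mult_left_mono) auto
  ultimately show ?thesis using True unfolding b_def by (simp add: mult.commute)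
next
  case False
  then have "s * \<bar>s - sqrt (max k 0)\<bar> = s^2" using assms by (simp add: power2_eq_square)
  moreover have "0 \<le> s^2 - k" using False zero_le_power2[of s] by linarith
  then have "\<bar>s^2 - k\<bar> = s^2 - k" by simp
  ultimately show ?thesis using False by simp
qed

lemma caseB1b:
  assumes d: "0 < \<delta>" "\<delta> \<le> 0.01" and T: "2 \<le> T" and rho: "2 \<le> \<bar>\<rho>\<bar>" and sm: "\<bar>\<rho>^2 - k\<bar> < 10 * \<bar>\<rho>\<bar>"
  shows "GOOD \<delta> T k \<rho>"
proof -
  have T0: "0 < T" using T by simp
  define M where "M = NY 1 k \<rho>"
  have KYw: "KY 1 k \<rho> = 1" using rho by (simp add: KY1)
  define \<sigma> where "\<sigma> = \<bar>\<rho>\<bar> / 2"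
  have s1: "1 \<le> \<sigma>" using rho by (simp add: \<sigma>_def)
  have Mb: "1 \<le> M" "M \<le> 10 * \<sigma>" using sm rho unfolding M_def NY1 \<sigma>_def by (auto simp: max_def)
  define b where "b = sqrt (max k 0)"
  define a1 where "a1 = (if 0 \<le> \<rho> then \<rho> - b else \<rho> + b)"
  define c where "c = T * \<sigma> / 2"
  have c0: "0 < c" using T0 s1 by (simp add: c_def)
  have pw: "phi \<delta> (Y T k (\<rho> - r)) \<le> ennreal (1 * gfun \<delta> c \<sigma> (r - a1) + 0 * gfun \<delta> 1 1 (r - 0))"
    if r: "r \<in> {-1..1}" for r
  proof -
    define s where "s = \<rho> - r"
    have rr: "-1 \<le> r" "r \<le> 1" using r by auto
    have sabs: "\<sigma> \<le> \<bar>s\<bar>" using rr rho unfolding s_def \<sigma>_def abs_if by (auto split: if_splits)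
    have KYv: "KY T k s = 1"
    proof -
      have "2 * 1 \<le> T * \<bar>s\<bar>" using T sabs s1 by (intro mult_mono) auto
      then show ?thesis unfolding KY_def by auto
    qed
    have N1: "\<bar>s\<bar> \<le> NY T k s" "T * \<bar>s^2 - k\<bar> / 2 \<le> NY T k s" unfolding NY_def by auto
    have key: "\<sigma> * \<bar>r - a1\<bar> \<le> \<bar>s^2 - k\<bar>"
    proof (cases "0 \<le> \<rho>")
      case True
      then have sp: "\<sigma> \<le> s" using r rho unfolding s_def \<sigma>_def by auto
      have "\<bar>r - a1\<bar> = \<bar>s - b\<bar>" using True unfolding a1_def s_def by simp
      moreover have "\<sigma> * \<bar>s - b\<bar> \<le> s * \<bar>s - b\<bar>" using sp by (intro mult_right_mono) auto
      moreover have "s * \<bar>s - b\<bar> \<le> \<bar>s^2 - k\<bar>" unfolding b_def using sp s1 by (intro quad_lower2) auto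
      ultimately show ?thesis by simp
    next
      case False
      then have sp: "\<sigma> \<le> -s" using r rho unfolding s_def \<sigma>_def by auto
      have "\<bar>r - a1\<bar> = \<bar>(-s) - b\<bar>" using False unfolding a1_def s_def by simp
      moreover have "\<sigma> * \<bar>(-s) - b\<bar> \<le> (-s) * \<bar>(-s) - b\<bar>" using sp by (intro mult_right_mono) auto
      moreover have "(-s) * \<bar>(-s) - b\<bar> \<le> \<bar>(-s)^2 - k\<bar>" unfolding b_def using sp s1 by (intro quad_lower2) auto
      ultimately show ?thesis by simp
    qed
    have "T * (\<sigma> * \<bar>r - a1\<bar>) / 2 \<le> T * \<bar>s^2 - k\<bar> / 2" using key T0
      by (smt (verit) divide_right_mono mult_left_mono)
    then have "max (c * \<bar>r - a1\<bar>) \<sigma> \<le> NY T k s" using N1 sabs unfolding c_def by simp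
    then have "phi \<delta> (Y T k s) \<le> ennreal (gfun \<delta> c \<sigma> (r - a1))"
      unfolding gfun_def using phi_le_one[OF T0 KYv _ _ d(1)] s1 by simp
    then show ?thesis unfolding s_def by simp
  qed
  have num: "1 * Gv \<delta> c \<sigma> + 0 * Gv \<delta> 1 1 \<le> 80/\<delta> * T powr (-\<delta>) * M powr (-1-\<delta>)"
  proof -
    have e1: "\<sigma> powr (-\<delta>) / \<sigma> = \<sigma> powr (-1-\<delta>)"
      using s1 by (simp add: powr_diff powr_minus_divide)
    have f1: "(10 * \<sigma>) powr (-1-\<delta>) \<le> M powr (-1-\<delta>)" using Mb d by (intro powr_mono2') auto
    have e2: "(10 * \<sigma>) powr (-1-\<delta>) = \<sigma> powr (-1-\<delta>) / (10 * 10 powr \<delta>)"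
    proof -
      have "(10::real) powr (-1-\<delta>) = 1 / (10 * 10 powr \<delta>)"
        by (simp add: powr_diff powr_minus_divide powr_add[symmetric] powr_mult_base)
      then show ?thesis by (simp add: powr_mult)
    qed
    have f2: "(10::real) powr \<delta> \<le> 1.05" using pow_small[of 10 \<delta>] d by simp
    have f3: "1 / T \<le> T powr (-\<delta>)" using inv_le_powr[of T \<delta>] T d by simp
    have f8: "1 + 1/\<delta> \<le> 1.01/\<delta>" using delta_frac d by simp
    have "1 * Gv \<delta> c \<sigma> + 0 * Gv \<delta> 1 1 = 4 * (1 + 1/\<delta>) * (1/T) * (\<sigma> powr (-\<delta>) / \<sigma>)"
      unfolding Gv_def c_def using T0 s1 by (simp add: field_simps)
    also have "\<dots> \<le> 4 * (1.01/\<delta>) * T powr (-\<delta>) * \<sigma> powr (-1-\<delta>)"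
      unfolding e1 using f3 f8 d T0 by (intro mult_mono mult_right_mono) auto
    also have "\<dots> \<le> 80/\<delta> * T powr (-\<delta>) * (\<sigma> powr (-1-\<delta>) / (10 * 1.05))"
      using d by (simp add: field_simps)
    also have "\<dots> \<le> 80/\<delta> * T powr (-\<delta>) * (\<sigma> powr (-1-\<delta>) / (10 * 10 powr \<delta>))"
    proof -
      have "\<sigma> powr (-1-\<delta>) / (10 * 1.05) \<le> \<sigma> powr (-1-\<delta>) / (10 * 10 powr \<delta>)"
        using f2 by (intro divide_left_mono mult_mono) auto
      then show ?thesis using d by (intro mult_left_mono) auto
    qed
    also have "\<dots> \<le> 80/\<delta> * T powr (-\<delta>) * M powr (-1-\<delta>)"
      using f1 e2 d by (intro mult_left_mono) auto
    finally show ?thesis .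
  qed
  have phiw: "phi \<delta> (Y 1 k \<rho>) = ennreal (M powr (-1-\<delta>))" unfolding M_def using KYw by (rule phiw_one)
  show ?thesis unfolding GOOD_def
    apply (rule exI[of _ 1], rule exI[of _ c], rule exI[of _ a1], rule exI[of _ \<sigma>])
    apply (rule exI[of _ 0], rule exI[of _ 1], rule exI[of _ 0], rule exI[of _ 1])
    apply (rule exI[of _ "M powr (-1-\<delta>)"])
    using pw num phiw c0 s1 by auto
qed



lemma caseB2a:
  assumes d: "0 < \<delta>" "\<delta> \<le> 0.01" and T: "2 \<le> T" and rho: "\<bar>\<rho>\<bar> < 2" and kb: "12 \<le> \<bar>k\<bar>"
  shows "GOOD \<delta> T k \<rho>"
proof -
  have T0: "0 < T" using T by simp
  define M where "M = NY 1 k \<rho>"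
  have KYw: "KY 1 k \<rho> = 1" using kb by (simp add: KY1)
  have r4: "\<rho>^2 < 4" using sq_lt4[OF rho] .
  have Mb: "1 \<le> M" "M \<le> \<bar>k\<bar>"
  proof -
    have "\<bar>\<rho>^2 - k\<bar> \<le> 2 * \<bar>k\<bar>" using r4 kb zero_le_power2[of \<rho>] by linarith
    then show "1 \<le> M" "M \<le> \<bar>k\<bar>" using rho kb unfolding M_def NY1 by (auto simp: max_def)
  qed
  define A1 where "A1 = (1/8 * T * M) powr (-1-\<delta>)"
  have pw: "phi \<delta> (Y T k (\<rho> - r)) \<le> ennreal (A1 * gfun \<delta> 1 1 (r - 0) + 0 * gfun \<delta> 1 1 (r - 0))"
    if r: "r \<in> {-1..1}" for r
  proof -
    define s where "s = \<rho> - r"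
    have rr: "-1 \<le> r" "r \<le> 1" using r by auto
    have s3: "\<bar>s\<bar> < 3" using rr rho unfolding s_def abs_if by (auto split: if_splits)
    have "\<bar>s\<bar>^2 < 3^2" using s3 by (intro power_strict_mono) auto
    then have s9: "s^2 < 9" by simp
    have KYv: "KY T k s = 1"
    proof -
      have "1 * 1 \<le> T^2 * \<bar>k\<bar>" using T kb by (intro mult_mono) (auto simp: one_le_power)
      then show ?thesis unfolding KY_def by auto
    qed
    have "\<bar>k\<bar> - s^2 \<le> \<bar>s^2 - k\<bar>" using zero_le_power2[of s] by linarith
    then have "\<bar>k\<bar> / 4 \<le> \<bar>s^2 - k\<bar>" using s9 kb by linarith
    then have "T * (\<bar>k\<bar> / 4) / 2 \<le> NY T k s" unfolding NY_def using T0
      by (smt (verit) divide_right_mono mult_left_mono max.cobounded1)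
    moreover have "T * M \<le> T * \<bar>k\<bar>" using Mb T0 by (intro mult_left_mono) auto
    ultimately have Nl: "1/8 * T * M \<le> NY T k s" by simp
    have "phi \<delta> (Y T k s) \<le> ennreal A1" unfolding A1_def
      using phi_le_one[OF T0 KYv _ Nl d(1)] T0 Mb by simp
    then show ?thesis using gfun11[OF r] unfolding s_def by simp
  qed
  have num: "A1 * Gv \<delta> 1 1 + 0 * Gv \<delta> 1 1 \<le> 80/\<delta> * T powr (-\<delta>) * M powr (-1-\<delta>)"
    unfolding A1_def using const_num[of \<delta> "1/8" T M] d T Mb by simp
  have phiw: "phi \<delta> (Y 1 k \<rho>) = ennreal (M powr (-1-\<delta>))" unfolding M_def using KYw by (rule phiw_one)
  show ?thesis unfolding GOOD_def
    apply (rule exI[of _ A1], rule exI[of _ 1], rule exI[of _ 0], rule exI[of _ 1])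
    apply (rule exI[of _ 0], rule exI[of _ 1], rule exI[of _ 0], rule exI[of _ 1])
    apply (rule exI[of _ "M powr (-1-\<delta>)"])
    using pw num phiw by (auto simp: A1_def)
qed

lemma caseB2b:
  assumes d: "0 < \<delta>" "\<delta> \<le> 0.01" and T: "2 \<le> T" and rho: "\<bar>\<rho>\<bar> < 2" and kb: "1 \<le> \<bar>k\<bar>" "\<bar>k\<bar> < 12"
  shows "GOOD \<delta> T k \<rho>"
proof -
  have T0: "0 < T" using T by simp
  define M where "M = NY 1 k \<rho>"
  have KYw: "KY 1 k \<rho> = 1" using kb by (simp add: KY1)
  have r4: "\<rho>^2 < 4" using sq_lt4[OF rho] .
  have Mb: "1 \<le> M" "M \<le> 8"
  proof -
    have "\<bar>\<rho>^2 - k\<bar> \<le> 16" using r4 kb zero_le_power2[of \<rho>] by linarith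
    then show "1 \<le> M" "M \<le> 8" using rho kb unfolding M_def NY1 by (auto simp: max_def)
  qed
  define a where "a = sqrt \<bar>k\<bar>"
  have a1: "1 \<le> a" using kb by (simp add: a_def)
  have a2: "a^2 = \<bar>k\<bar>" by (simp add: a_def)
  define c where "c = T / 2"
  define dd where "dd = (1/2::real)"
  have c0: "0 < c" and d0: "0 < dd" using T0 by (auto simp: c_def dd_def)
  have pw: "phi \<delta> (Y T k (\<rho> - r)) \<le> ennreal (1 * gfun \<delta> c dd (r - (\<rho> - a)) + 1 * gfun \<delta> c dd (r - (\<rho> + a)))"
    if r: "r \<in> {-1..1}" for r
  proof -
    define s where "s = \<rho> - r"
    have KYv: "KY T k s = 1"
    proof -
      have "1 * 1 \<le> T^2 * \<bar>k\<bar>" using T kb by (intro mult_mono) (auto simp: one_le_power)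
      then show ?thesis unfolding KY_def by auto
    qed
    have N1: "\<bar>s\<bar> \<le> NY T k s" "T * \<bar>s^2 - k\<bar> / 2 \<le> NY T k s" unfolding NY_def by auto
    have floor: "dd \<le> NY T k s"
    proof (cases "1/2 \<le> \<bar>s\<bar>")
      case True
      then show ?thesis using N1 unfolding dd_def by linarith
    next
      case False
      then have "\<bar>s\<bar>^2 \<le> (1/2)^2" by (intro power_mono) auto
      then have "s^2 \<le> 1/4" by (simp add: power_divide)
      moreover have "\<bar>k\<bar> - s^2 \<le> \<bar>s^2 - k\<bar>" using zero_le_power2[of s] by linarith
      ultimately have "3/4 \<le> \<bar>s^2 - k\<bar>" using kb by linarith
      then have "T * (3/4) / 2 \<le> NY T k s" using N1(2) T0
        by (smt (verit) divide_right_mono mult_left_mono)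
      then show ?thesis using T unfolding dd_def by simp
    qed
    have main: "max (c * \<bar>r - (\<rho> - a)\<bar>) dd \<le> NY T k s \<or> max (c * \<bar>r - (\<rho> + a)\<bar>) dd \<le> NY T k s"
    proof (cases "0 \<le> s")
      case True
      have "a * \<bar>s - a\<bar> \<le> \<bar>s^2 - k\<bar>" using quad_lower[OF True, of k] by (simp add: a_def)
      moreover have "1 * \<bar>s - a\<bar> \<le> a * \<bar>s - a\<bar>" using a1 by (intro mult_right_mono) auto
      ultimately have "T * \<bar>s - a\<bar> / 2 \<le> T * \<bar>s^2 - k\<bar> / 2" using T0
        by (smt (verit) divide_right_mono mult_left_mono)
      moreover have "\<bar>r - (\<rho> - a)\<bar> = \<bar>s - a\<bar>" unfolding s_def by linarith
      ultimately show ?thesis using N1 floor unfolding c_def by simp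
    next
      case False
      have "a * \<bar>s + a\<bar> \<le> \<bar>s^2 - k\<bar>" using quad_lower'[of s k] False by (simp add: a_def)
      moreover have "1 * \<bar>s + a\<bar> \<le> a * \<bar>s + a\<bar>" using a1 by (intro mult_right_mono) auto
      ultimately have "T * \<bar>s + a\<bar> / 2 \<le> T * \<bar>s^2 - k\<bar> / 2" using T0
        by (smt (verit) divide_right_mono mult_left_mono)
      moreover have "\<bar>r - (\<rho> + a)\<bar> = \<bar>s + a\<bar>" unfolding s_def by linarith
      ultimately show ?thesis using N1 floor unfolding c_def by simp
    qed
    have g: "phi \<delta> (Y T k s) \<le> ennreal (gfun \<delta> c dd (r - (\<rho> - a))) \<or> phi \<delta> (Y T k s) \<le> ennreal (gfun \<delta> c dd (r - (\<rho> + a)))"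
      unfolding gfun_def using main phi_le_one[OF T0 KYv _ _ d(1)] d0 by (meson less_max_iff_disj)
    have "ennreal (gfun \<delta> c dd (r - (\<rho> - a))) \<le> ennreal (1 * gfun \<delta> c dd (r - (\<rho> - a)) + 1 * gfun \<delta> c dd (r - (\<rho> + a)))"
         "ennreal (gfun \<delta> c dd (r - (\<rho> + a))) \<le> ennreal (1 * gfun \<delta> c dd (r - (\<rho> - a)) + 1 * gfun \<delta> c dd (r - (\<rho> + a)))"
      by (auto intro!: ennreal_leI simp: gfun_nonneg)
    then show ?thesis using g unfolding s_def by (meson order_trans)
  qed
  have num: "1 * Gv \<delta> c dd + 1 * Gv \<delta> c dd \<le> 80/\<delta> * T powr (-\<delta>) * M powr (-1-\<delta>)"
  proof -
    have f1: "dd powr (-\<delta>) = 2 powr \<delta>" unfolding dd_def using inv_powr[of "1/2" \<delta>] by simp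
    have f2: "(2::real) powr \<delta> \<le> 1.05" using pow_small[of 2 \<delta>] d by simp
    have f3: "1 / T \<le> T powr (-\<delta>)" using inv_le_powr[of T \<delta>] T d by simp
    have f7: "1 / (8 * 1.05) \<le> M powr (-1-\<delta>)" using M_pow_lower[OF Mb(1) Mb(2) _ d] by simp
    have f8: "1 + 1/\<delta> \<le> 1.01/\<delta>" using delta_frac d by simp
    have "1 * Gv \<delta> c dd + 1 * Gv \<delta> c dd = 8 * (1 + 1/\<delta>) * 2 powr \<delta> * (1 / T)"
      unfolding Gv_def c_def f1 using T0 by (simp add: field_simps)
    also have "\<dots> \<le> 8 * (1.01/\<delta>) * 1.05 * T powr (-\<delta>)"
      using f2 f3 f8 d T0 by (intro mult_mono mult_right_mono) auto
    also have "\<dots> \<le> 80/\<delta> * T powr (-\<delta>) * (1 / (8 * 1.05))"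
      using d by (simp add: field_simps)
    also have "\<dots> \<le> 80/\<delta> * T powr (-\<delta>) * M powr (-1-\<delta>)"
      using f7 d by (intro mult_left_mono) auto
    finally show ?thesis .
  qed
  have phiw: "phi \<delta> (Y 1 k \<rho>) = ennreal (M powr (-1-\<delta>))" unfolding M_def using KYw by (rule phiw_one)
  show ?thesis unfolding GOOD_def
    apply (rule exI[of _ 1], rule exI[of _ c], rule exI[of _ "\<rho> - a"], rule exI[of _ dd])
    apply (rule exI[of _ 1], rule exI[of _ c], rule exI[of _ "\<rho> + a"], rule exI[of _ dd])
    apply (rule exI[of _ "M powr (-1-\<delta>)"])
    using c0 d0 pw num phiw by auto
qed



lemma normalized:
  assumes d: "0 < \<delta>" "\<delta> \<le> 0.01" and T: "2 \<le> T"
  shows "KY 1 k \<rho> = 0 \<or> GOOD \<delta> T k \<rho>"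
proof (cases "2 \<le> \<bar>\<rho>\<bar>")
  case True
  then show ?thesis using caseB1a[OF d T True] caseB1b[OF d T True] by (cases "10 * \<bar>\<rho>\<bar> \<le> \<bar>\<rho>^2 - k\<bar>") auto
next
  case False
  then have rho: "\<bar>\<rho>\<bar> < 2" by simp
  show ?thesis
  proof (cases "1 \<le> \<bar>k\<bar>")
    case True
    then show ?thesis using caseB2a[OF d T rho] caseB2b[OF d T rho True] by (cases "12 \<le> \<bar>k\<bar>") auto
  next
    case False
    then have k: "\<bar>k\<bar> < 1" by simp
    show ?thesis
    proof (cases "k = 0")
      case True
      then show ?thesis using rho by (simp add: KY1)
    next
      case False
      then show ?thesis using caseS1[OF d T k False rho] caseS2[OF d T k False rho] by (cases "1 \<le> T^2 * \<bar>k\<bar>") auto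
    qed
  qed
qed

lemma phi_scale_Y: "c \<noteq> 0 \<Longrightarrow> 0 < T \<Longrightarrow> phi \<delta> (c *s Y T k s) = ennreal (\<bar>c\<bar> powr (-1-\<delta>)) * phi \<delta> (Y T k s)"
  by (rule phi_scale) (auto simp: Y_def)

lemma ptw: "p = ennreal (X powr (-1-\<delta>)) \<Longrightarrow> X = max (c * \<bar>y\<bar>) d \<Longrightarrow> p \<le> ennreal (1 * gfun \<delta> c d y + 0 * q)"
  unfolding gfun_def by simp

lemma kappa_3zero: "x$3 = 0 \<Longrightarrow> kappa x = 1"
  unfolding kappa_def kappa0_def by auto

lemma phi_3zero: "x$3 = 0 \<Longrightarrow> phi \<delta> x = ennreal (supnorm3 x powr (-1-\<delta>))"
  unfolding phi_def by (simp add: kappa_3zero)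

lemma exp_powr: "exp (- \<delta> * (t::real)) = exp t powr (-\<delta>)"
  by (simp add: powr_def)

lemma w3_num:
  fixes \<delta> T M b :: real
  assumes d: "0 < \<delta>" "\<delta> \<le> 0.01" and T: "2 \<le> T" and M0: "0 < M" and bM: "M/2 \<le> b"
  shows "1 * Gv \<delta> (T*b) b + 0 * Gv \<delta> 1 1 \<le> 80/\<delta> * T powr (-\<delta>) * M powr (-1-\<delta>)"
proof -
  have T0: "0 < T" using T by simp
  have b0: "0 < b" using M0 bM by simp
  have e1: "b powr (-\<delta>) / (T * b) = (1/T) * b powr (-1-\<delta>)"
  proof -
    have "b powr (-1-\<delta>) = b powr (-\<delta>) / b" using b0 by (simp add: powr_diff powr_minus_divide)
    then show ?thesis by simp
  qed
  have f1: "b powr (-1-\<delta>) \<le> (M/2) powr (-1-\<delta>)" using bM M0 d by (intro powr_mono2') auto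
  have e2: "(M/2) powr (-1-\<delta>) = 2 powr (1+\<delta>) * M powr (-1-\<delta>)"
  proof -
    have "(1/2::real) powr (-1-\<delta>) = 2 powr (1+\<delta>)" using inv_powr[of "1/2" "1+\<delta>"] by simp
    moreover have "(M/2) powr (-1-\<delta>) = M powr (-1-\<delta>) * (1/2) powr (-1-\<delta>)"
      by (simp only: divide_inverse powr_mult) simp
    ultimately show ?thesis by simp
  qed
  have f2: "(2::real) powr (1+\<delta>) \<le> 2 * 1.05" using pow_small[of 2 \<delta>] d by (simp add: powr_add)
  have f3: "1 / T \<le> T powr (-\<delta>)" using inv_le_powr[of T \<delta>] T d by simp
  have f8: "1 + 1/\<delta> \<le> 1.01/\<delta>" using delta_frac d by simp
  have "1 * Gv \<delta> (T*b) b + 0 * Gv \<delta> 1 1 = 2 * (1 + 1/\<delta>) * ((1/T) * b powr (-1-\<delta>))"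
    unfolding Gv_def e1[symmetric] by simp
  also have "\<dots> \<le> 2 * (1.01/\<delta>) * (T powr (-\<delta>) * (2 powr (1+\<delta>) * M powr (-1-\<delta>)))"
  proof -
    have h: "(1/T) * b powr (-1-\<delta>) \<le> T powr (-\<delta>) * (2 powr (1+\<delta>) * M powr (-1-\<delta>))"
      using f1 f3 e2 T0 by (intro mult_mono) auto
    then show ?thesis using f8 d T0 by (intro mult_mono[OF _ h]) auto
  qed
  also have "\<dots> \<le> 2 * (1.01/\<delta>) * (T powr (-\<delta>) * ((2 * 1.05) * M powr (-1-\<delta>)))"
    using f2 d by (intro mult_left_mono mult_right_mono) auto
  also have "\<dots> \<le> 80/\<delta> * T powr (-\<delta>) * M powr (-1-\<delta>)"
  proof -
    have "2 * (1.01/\<delta>) * (2 * 1.05) \<le> 80/\<delta>" using d by (simp add: field_simps)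
    then have "2 * (1.01/\<delta>) * (2 * 1.05) * (T powr (-\<delta>) * M powr (-1-\<delta>)) \<le> 80/\<delta> * (T powr (-\<delta>) * M powr (-1-\<delta>))"
      by (intro mult_right_mono) auto
    then show ?thesis by (simp add: algebra_simps)
  qed
  finally show ?thesis .
qed

lemma w3zero:
  fixes \<delta> t :: real and w :: "real^3"
  assumes d: "0 < \<delta>" "\<delta> \<le> 0.01" and t: "1 \<le> t" and w: "w \<noteq> 0" and w3: "w$3 = 0"
  shows "(\<integral>\<^sup>+ r \<in> {-1..1}. phi \<delta> (a_mat t *v (u_mat r *v w)) \<partial>lborel)
           \<le> ennreal (80 / \<delta> * exp (- \<delta> * t)) * phi \<delta> w"
proof -
  define T where "T = exp t"
  have T: "2 \<le> T" unfolding T_def using t exp_ge_add_one_self[of t] by linarith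
  have T0: "0 < T" using T by simp
  define M where "M = supnorm3 w"
  have M0: "0 < M" unfolding M_def using supnorm3_pos[OF w] .
  have Me: "M = max \<bar>w$1\<bar> \<bar>w$2\<bar>" unfolding M_def supnorm3_def using w3 by (simp add: max_def)
  have phiw: "phi \<delta> w = ennreal (M powr (-1-\<delta>))" unfolding M_def using w3 by (rule phi_3zero)
  have v: "a_mat t *v (u_mat r *v w) = vector [T * (w$1 + r * w$2), w$2, 0]" for r
    unfolding action T_def using w3 by simp
  have phiv: "phi \<delta> (a_mat t *v (u_mat r *v w)) = ennreal (max (T * \<bar>w$1 + r * w$2\<bar>) \<bar>w$2\<bar> powr (-1-\<delta>))" for r
  proof -
    have "phi \<delta> (a_mat t *v (u_mat r *v w)) = ennreal (supnorm3 (a_mat t *v (u_mat r *v w)) powr (-1-\<delta>))"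
      by (rule phi_3zero) (simp add: v)
    also have "supnorm3 (a_mat t *v (u_mat r *v w)) = max (T * \<bar>w$1 + r * w$2\<bar>) \<bar>w$2\<bar>"
      unfolding v supnorm3_def using T0 by (simp add: abs_mult max_def)
    finally show ?thesis .
  qed
  have "(\<integral>\<^sup>+ r \<in> {-1..1}. phi \<delta> (a_mat t *v (u_mat r *v w)) \<partial>lborel) \<le> ennreal (80/\<delta> * T powr (-\<delta>) * M powr (-1-\<delta>))"
  proof (cases "M/2 \<le> \<bar>w$2\<bar>")
    case True
    have b0: "0 < \<bar>w$2\<bar>" using True M0 by simp
    show ?thesis
    proof (rule pack[where Aa=1 and ca="T*\<bar>w$2\<bar>" and da="\<bar>w$2\<bar>" and xa="- (w$1) / w$2" and Ab=0 and cb=1 and db=1 and xb=0])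
      show "0 < \<delta>" "0 < T*\<bar>w$2\<bar>" "0 < \<bar>w$2\<bar>" "0 < (1::real)" "0 < (1::real)" "0 \<le> (1::real)" "0 \<le> (0::real)"
        using d T0 b0 by auto
      fix r assume r: "r \<in> {-1..1::real}"
      have "T * \<bar>w$1 + r * w$2\<bar> = T * \<bar>w$2\<bar> * \<bar>r - - (w$1) / w$2\<bar>"
      proof -
        have "w$1 + r * w$2 = w$2 * (r - - (w$1) / w$2)" using b0 by (simp add: field_simps)
        then show ?thesis by (simp add: abs_mult)
      qed
      then have eqm: "max (T * \<bar>w$1 + r * w$2\<bar>) \<bar>w$2\<bar> = max ((T * \<bar>w$2\<bar>) * \<bar>r - - (w$1) / w$2\<bar>) \<bar>w$2\<bar>"
        by (rule arg_cong[where f="\<lambda>x. max x \<bar>w$2\<bar>"])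
      show "phi \<delta> (a_mat t *v (u_mat r *v w)) \<le> ennreal (1 * gfun \<delta> (T*\<bar>w$2\<bar>) \<bar>w$2\<bar> (r - - (w$1) / w$2) + 0 * gfun \<delta> 1 1 (r - 0))"
        by (rule ptw[OF phiv eqm])
    next
      show "1 * Gv \<delta> (T*\<bar>w$2\<bar>) \<bar>w$2\<bar> + 0 * Gv \<delta> 1 1 \<le> 80/\<delta> * T powr (-\<delta>) * M powr (-1-\<delta>)"
        by (rule w3_num[OF d T M0 True])
    qed
  next
    case False
    then have M1: "M = \<bar>w$1\<bar>" using Me by (auto simp: max_def)
    show ?thesis
    proof (rule pack[where Aa="(1/2 * T * M) powr (-1-\<delta>)" and ca=1 and da=1 and xa=0 and Ab=0 and cb=1 and db=1 and xb=0])
      show "0 < \<delta>" "0 < (1::real)" "0 < (1::real)" "0 < (1::real)" "0 < (1::real)" "0 \<le> (1/2 * T * M) powr (-1-\<delta>)" "0 \<le> (0::real)"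
        using d by auto
      fix r assume r: "r \<in> {-1..1::real}"
      have "\<bar>r * w$2\<bar> \<le> \<bar>w$2\<bar>" using r by (auto simp: abs_mult intro!: mult_left_le_one_le)
      then have "M/2 \<le> \<bar>w$1 + r * w$2\<bar>" using False M1 by linarith
      then have "T * (M/2) \<le> T * \<bar>w$1 + r * w$2\<bar>" using T0 by (intro mult_left_mono) auto
      then have "1/2 * T * M \<le> max (T * \<bar>w$1 + r * w$2\<bar>) \<bar>w$2\<bar>" by simp
      then have "max (T * \<bar>w$1 + r * w$2\<bar>) \<bar>w$2\<bar> powr (-1-\<delta>) \<le> (1/2 * T * M) powr (-1-\<delta>)"
        using T0 M0 d by (intro powr_mono2') auto
      then show "phi \<delta> (a_mat t *v (u_mat r *v w)) \<le> ennreal ((1/2 * T * M) powr (-1-\<delta>) * gfun \<delta> 1 1 (r - 0) + 0 * gfun \<delta> 1 1 (r - 0))"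
        unfolding phiv using gfun11[OF r] by (simp add: ennreal_leI)
    next
      show "(1/2 * T * M) powr (-1-\<delta>) * Gv \<delta> 1 1 + 0 * Gv \<delta> 1 1 \<le> 80/\<delta> * T powr (-\<delta>) * M powr (-1-\<delta>)"
        using const_num[of \<delta> "1/2" T M] d T M0 by simp
    qed
  qed
  also have "\<dots> = ennreal (80 / \<delta> * exp (- \<delta> * t)) * phi \<delta> w"
    unfolding phiw exp_powr T_def using d by (simp add: ennreal_mult[symmetric] mult.assoc)
  finally show ?thesis .
qed

theorem proposition3p8:
  fixes \<delta> t :: real and w :: "real^3"
  assumes "0 < \<delta>" and "\<delta> \<le> 0.01" and "1 \<le> t" and "w \<noteq> 0"
  shows "(\<integral>\<^sup>+ r \<in> {-1..1}. phi \<delta> (a_mat t *v (u_mat r *v w)) \<partial>lborel)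
           \<le> ennreal (80 / \<delta> * exp (- \<delta> * t)) * phi \<delta> w"
proof (cases "w$3 = 0")
  case True
  then show ?thesis using w3zero assms by blast
next
  case False
  have d: "0 < \<delta>" "\<delta> \<le> 0.01" using assms by auto
  define T where "T = exp t"
  have T: "2 \<le> T" unfolding T_def using assms(3) exp_ge_add_one_self[of t] by linarith
  have T0: "0 < T" using T by simp
  define k where "k = Q0 w / (w$3)^2"
  define \<rho> where "\<rho> = - (w$2) / w$3"
  define lam where "lam = \<bar>w$3\<bar> powr (-1-\<delta>)"
  have lam0: "0 < lam" using False by (simp add: lam_def)
  have Y3: "(Y T' k s)$3 \<noteq> 0" if "0 < T'" for T' s using that by (simp add: Y_def)
  have phiv: "phi \<delta> (a_mat t *v (u_mat r *v w)) = ennreal lam * phi \<delta> (Y T k (\<rho> - r))" for r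
    unfolding action_Y[OF False] lam_def k_def \<rho>_def T_def
    by (rule phi_scale_Y[OF False]) simp
  have phiw: "phi \<delta> w = ennreal lam * phi \<delta> (Y 1 k \<rho>)"
    by (subst w_Y[OF False]) (unfold lam_def k_def \<rho>_def, rule phi_scale_Y[OF False], simp)
  have RHS: "ennreal (80 / \<delta> * exp (- \<delta> * t)) = ennreal (80/\<delta> * T powr (-\<delta>))"
    unfolding T_def exp_powr by simp
  from normalized[OF d T, of k \<rho>] show ?thesis
  proof
    assume K0: "KY 1 k \<rho> = 0"
    have i1: "phi \<delta> (Y 1 k \<rho>) = \<infinity>" using K0 by (simp add: phi_Y)
    have l0: "ennreal lam \<noteq> 0" using lam0 by simp
    have "phi \<delta> w = \<infinity>" unfolding phiw i1 using l0 by simp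
    moreover have "ennreal (80 / \<delta> * exp (- \<delta> * t)) \<noteq> 0" using d by simp
    ultimately have "ennreal (80 / \<delta> * exp (- \<delta> * t)) * phi \<delta> w = \<infinity>"
      by simp
    then show ?thesis by simp
  next
    assume "GOOD \<delta> T k \<rho>"
    then obtain A1 c1 a1 d1 A2 c2 a2 d2 P where
      pos: "0 < c1" "0 < d1" "0 < c2" "0 < d2" "0 \<le> A1" "0 \<le> A2" "0 \<le> P"
      and pP: "phi \<delta> (Y 1 k \<rho>) = ennreal P"
      and pw: "\<forall>r\<in>{-1..1}. phi \<delta> (Y T k (\<rho> - r)) \<le> ennreal (A1 * gfun \<delta> c1 d1 (r - a1) + A2 * gfun \<delta> c2 d2 (r - a2))"
      and num: "A1 * Gv \<delta> c1 d1 + A2 * Gv \<delta> c2 d2 \<le> 80/\<delta> * T powr (-\<delta>) * P"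
      unfolding GOOD_def by blast
    have "(\<integral>\<^sup>+ r \<in> {-1..1}. phi \<delta> (a_mat t *v (u_mat r *v w)) \<partial>lborel) \<le> ennreal (lam * (80/\<delta> * T powr (-\<delta>) * P))"
    proof (rule pack[where Aa="lam * A1" and ca=c1 and da=d1 and xa=a1 and Ab="lam * A2" and cb=c2 and db=d2 and xb=a2])
      show "0 < \<delta>" "0 < c1" "0 < d1" "0 < c2" "0 < d2" "0 \<le> lam * A1" "0 \<le> lam * A2"
        using d pos lam0 by auto
      fix r assume r: "r \<in> {-1..1::real}"
      have "phi \<delta> (a_mat t *v (u_mat r *v w)) \<le> ennreal lam * ennreal (A1 * gfun \<delta> c1 d1 (r - a1) + A2 * gfun \<delta> c2 d2 (r - a2))"
        unfolding phiv using pw r by (intro mult_left_mono) auto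
      also have "\<dots> = ennreal (lam * (A1 * gfun \<delta> c1 d1 (r - a1) + A2 * gfun \<delta> c2 d2 (r - a2)))"
        by (rule ennreal_mult'[symmetric]) (use lam0 in simp)
      also have "lam * (A1 * gfun \<delta> c1 d1 (r - a1) + A2 * gfun \<delta> c2 d2 (r - a2)) = lam * A1 * gfun \<delta> c1 d1 (r - a1) + lam * A2 * gfun \<delta> c2 d2 (r - a2)"
        by (simp add: algebra_simps)
      finally show "phi \<delta> (a_mat t *v (u_mat r *v w)) \<le> ennreal (lam * A1 * gfun \<delta> c1 d1 (r - a1) + lam * A2 * gfun \<delta> c2 d2 (r - a2))" .
    next
      have "lam * (A1 * Gv \<delta> c1 d1 + A2 * Gv \<delta> c2 d2) \<le> lam * (80/\<delta> * T powr (-\<delta>) * P)"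
        using num lam0 by (intro mult_left_mono) auto
      then show "lam * A1 * Gv \<delta> c1 d1 + lam * A2 * Gv \<delta> c2 d2 \<le> lam * (80/\<delta> * T powr (-\<delta>) * P)"
        by (simp add: algebra_simps)
    qed
    also have "\<dots> = ennreal (80 / \<delta> * exp (- \<delta> * t)) * phi \<delta> w"
      unfolding RHS phiw pP using lam0 pos d by (simp add: ennreal_mult[symmetric] algebra_simps)
    finally show ?thesis .
  qed
qed


end
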